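(* Let $\mathcal B=(B_1,\dots,B_d)$ be a splitting of order $d$ of $B_J\in\mathbb R^{n\times n}$. Then $1$ is an eigenvalue of $T(\mathcal B)$ if and only if $1$ is an eigenvalue of $B_J$. In particular, if $1$ is an eigenvalue of $B_J$ then the iteration $X^{(k+1)}=T(\mathcal B)X^{(k)}+\Gamma$ cannot be convergent for all initial data (since $\rho(T(\mathcal B))\ge1$).
   Context: For $B\in\mathbb R^{n\times n}$, a splitting of $B$ of order $d\ge1$ is an ordered $d$-tuple $\mathcal B=(B_1,\dots,B_d)$ of real $n\times n$ matrices with $B_p\neq O$ for all $p$, $\sum_{p=1}^d B_p=B$, and $B_p\circ B_q=O$ (Hadamard product) for $p\ne q$. The iteration matrix of $\mathcal B$ is the $dn\times dn$ matrix $T(\mathcal B)=(I_{dn}-\mathcal L)^{-1}\mathcal U$, where $\mathcal L,\mathcal U$ are $d\times d$ block matrices with $n\times n$ blocks, $\mathcal L_{ij}=B_j$ if $i>j$ and $O$ otherwise, $\mathcal U_{ij}=B_j$ if $i\le j$ and $O$ otherwise. *)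

theory Defs
  imports "Jordan_Normal_Form.Matrix" "Jordan_Normal_Form.Char_Poly"
    "Jordan_Normal_Form.Gauss_Jordan_Elimination"
begin

text \<open>A splitting of order d of the n x n matrix BJ, indexed 0..d-1 (paper: 1..d).\<close>
definition is_splitting :: "nat \<Rightarrow> nat \<Rightarrow> (nat \<Rightarrow> real mat) \<Rightarrow> real mat \<Rightarrow> bool" where
  "is_splitting n d B BJ \<longleftrightarrow>
     d \<ge> 1 \<and> BJ \<in> carrier_mat n n \<and>
     (\<forall>p<d. B p \<in> carrier_mat n n \<and> B p \<noteq> 0\<^sub>m n n) \<and>
     BJ = mat n n (\<lambda>(i,j). \<Sum>p<d. B p $$ (i,j)) \<and>
     (\<forall>p<d. \<forall>q<d. p \<noteq> q \<longrightarrow> (\<forall>i<n. \<forall>j<n. B p $$ (i,j) * B q $$ (i,j) = 0))"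

text \<open>Block matrices: block (I,J) occupies rows I*n..I*n+n-1, columns J*n..J*n+n-1.\<close>
definition split_L :: "nat \<Rightarrow> nat \<Rightarrow> (nat \<Rightarrow> real mat) \<Rightarrow> real mat" where
  "split_L n d B = mat (d*n) (d*n) (\<lambda>(i,j).
     if i div n > j div n then B (j div n) $$ (i mod n, j mod n) else 0)"

definition split_U :: "nat \<Rightarrow> nat \<Rightarrow> (nat \<Rightarrow> real mat) \<Rightarrow> real mat" where
  "split_U n d B = mat (d*n) (d*n) (\<lambda>(i,j).
     if i div n \<le> j div n then B (j div n) $$ (i mod n, j mod n) else 0)"

definition iter_mat :: "nat \<Rightarrow> nat \<Rightarrow> (nat \<Rightarrow> real mat) \<Rightarrow> real mat" where
  "iter_mat n d B = the (mat_inverse (1\<^sub>m (d*n) - split_L n d B)) * split_U n d B"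

end

theory Submission
  imports Defs
begin

lemma sum_divmod:
  fixes g :: "nat \<Rightarrow> nat \<Rightarrow> 'a::comm_monoid_add"
  shows "(\<Sum>j<d*n. g (j div n) (j mod n)) = (\<Sum>p<d. \<Sum>c<n. g p c)"
proof (induction d)
  case 0 then show ?case by simp
next
  case (Suc d)
  have split: "(\<Sum>j<d*n+n. f j) = (\<Sum>j<d*n. f j) + (\<Sum>c<n. f (d*n+c))" for f :: "nat \<Rightarrow> 'a"
  proof -
    have "{..<d*n+n} = {..<d*n} \<union> {d*n..<d*n+n}" by auto
    then have "(\<Sum>j<d*n+n. f j) = (\<Sum>j<d*n. f j) + (\<Sum>j\<in>{d*n..<d*n+n}. f j)"
      by (metis sum.union_disjoint finite_lessThan finite_atLeastLessThan ivl_disj_int(2) lessThan_atLeast0)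
    also have "(\<Sum>j\<in>{d*n..<d*n+n}. f j) = (\<Sum>c<n. f (d*n+c))"
      by (rule sum.reindex_bij_witness[of _ "\<lambda>c. d*n+c" "\<lambda>j. j - d*n"]) auto
    finally show ?thesis .
  qed
  have "(\<Sum>j<Suc d*n. g (j div n) (j mod n)) = (\<Sum>j<d*n+n. g (j div n) (j mod n))"
    by (simp add: add.commute)
  also have "\<dots> = (\<Sum>j<d*n. g (j div n) (j mod n)) + (\<Sum>c<n. g ((d*n+c) div n) ((d*n+c) mod n))"
    by (rule split)
  also have "(\<Sum>c<n. g ((d*n+c) div n) ((d*n+c) mod n)) = (\<Sum>c<n. g d c)"
    by (rule sum.cong) auto
  finally show ?case using Suc by simp
qed

theorem proposition2p4:
  fixes n d :: nat and B :: "nat \<Rightarrow> real mat" and BJ :: "real mat"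
  assumes "is_splitting n d B BJ"
  shows "eigenvalue (iter_mat n d B) 1 \<longleftrightarrow> eigenvalue BJ 1"
proof -
  note S = assms[unfolded is_splitting_def]
  have d1: "d \<ge> 1" and BJc: "BJ \<in> carrier_mat n n" using S by auto
  have Bc: "\<And>p. p < d \<Longrightarrow> B p \<in> carrier_mat n n" using S by auto
  have BJe: "\<And>r c. r < n \<Longrightarrow> c < n \<Longrightarrow> BJ $$ (r,c) = (\<Sum>p<d. B p $$ (r,c))"
    using S by auto
  have n0: "n > 0"
  proof (rule ccontr)
    assume "\<not> n > 0"
    then have "n = 0" by simp
    moreover have "B 0 \<in> carrier_mat n n" "B 0 \<noteq> 0\<^sub>m n n" using S by auto
    ultimately show False by (metis eq_matI carrier_matD less_nat_zero_code index_zero_mat(2,3))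
  qed
  define N where "N = d*n"
  define L where "L = split_L n d B"
  define U where "U = split_U n d B"
  define M where "M = 1\<^sub>m N - L"
  have Lc: "L \<in> carrier_mat N N" unfolding L_def split_L_def N_def by simp
  have Uc: "U \<in> carrier_mat N N" unfolding U_def split_U_def N_def by simp
  have Mc: "M \<in> carrier_mat N N" unfolding M_def using Lc by (simp add: minus_carrier_mat)
  have "det M = prod_list (diag_mat M)"
  proof (rule det_lower_triangular[OF _ Mc])
    fix i j assume "i < j" "j < N"
    then have "\<not> i div n > j div n" by (simp add: div_le_mono leD)
    then show "M $$ (i,j) = 0" using \<open>i<j\<close> \<open>j<N\<close> Lc
      unfolding M_def L_def split_L_def N_def by simp
  qed
  also have "diag_mat M = replicate N 1"
    using Mc unfolding diag_mat_def M_def L_def split_L_def N_def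
    by (intro nth_equalityI) auto
  finally have "det M = 1" by simp
  then have "M \<in> Units (ring_mat TYPE(real) N ())" using det_non_zero_imp_unit[OF Mc] by simp
  then obtain P where mP: "mat_inverse M = Some P" using mat_inverse(1)[OF Mc, of "()"] by (cases "mat_inverse M") auto
  from mat_inverse(2)[OF Mc mP] have MP: "M * P = 1\<^sub>m N" and PM: "P * M = 1\<^sub>m N" and Pc: "P \<in> carrier_mat N N"
    by auto
  define T where "T = iter_mat n d B"
  have TPU: "T = P * U" unfolding T_def iter_mat_def using mP by (simp add: M_def L_def U_def N_def)
  have Tc: "T \<in> carrier_mat N N" using TPU Pc Uc by simp
  define F where "F = (\<lambda>r (v::real vec). \<Sum>j<N. B (j div n) $$ (r, j mod n) * v$j)"
  have key: "T *\<^sub>v v = v \<longleftrightarrow> (\<forall>i<N. v$i = F (i mod n) v)" if vc: "v \<in> carrier_vec N" for v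
  proof -
    have "T *\<^sub>v v = v \<longleftrightarrow> U *\<^sub>v v = M *\<^sub>v v"
    proof
      assume h: "T *\<^sub>v v = v"
      have "M *\<^sub>v (T *\<^sub>v v) = (M * P) *\<^sub>v (U *\<^sub>v v)"
        using TPU Mc Pc Uc vc by (simp add: assoc_mult_mat_vec)
      then show "U *\<^sub>v v = M *\<^sub>v v" using h MP Uc vc by simp
    next
      assume h: "U *\<^sub>v v = M *\<^sub>v v"
      have "T *\<^sub>v v = P *\<^sub>v (U *\<^sub>v v)" using TPU Pc Uc vc by (simp add: assoc_mult_mat_vec)
      also have "\<dots> = (P * M) *\<^sub>v v" using h Pc Mc vc by (simp add: assoc_mult_mat_vec)
      finally show "T *\<^sub>v v = v" using PM vc by simp
    qed
    also have "\<dots> \<longleftrightarrow> (\<forall>i<N. (U *\<^sub>v v)$i = (M *\<^sub>v v)$i)"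
    proof
      assume h: "U *\<^sub>v v = M *\<^sub>v v"
      show "\<forall>i<N. (U *\<^sub>v v)$i = (M *\<^sub>v v)$i" by (simp add: h del: index_mult_mat_vec)
    next
      assume h: "\<forall>i<N. (U *\<^sub>v v)$i = (M *\<^sub>v v)$i"
      show "U *\<^sub>v v = M *\<^sub>v v"
        by (rule eq_vecI) (use h Uc Mc in \<open>auto simp del: index_mult_mat_vec\<close>)
    qed
    also have "\<dots> \<longleftrightarrow> (\<forall>i<N. v$i = F (i mod n) v)"
    proof -
      have "(U *\<^sub>v v)$i = (M *\<^sub>v v)$i \<longleftrightarrow> v$i = F (i mod n) v" if i: "i < N" for i
      proof -
        have "(M *\<^sub>v v) = v - L *\<^sub>v v" unfolding M_def using Lc vc
          using minus_mult_distrib_mat_vec[of "1\<^sub>m N" N N L v] by simp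
        then have Mi: "(M *\<^sub>v v)$i = v$i - (L *\<^sub>v v)$i" using i vc Lc by (simp del: index_mult_mat_vec)
        have "(U *\<^sub>v v)$i + (L *\<^sub>v v)$i = (\<Sum>j<N. (U $$ (i,j) + L $$ (i,j)) * v$j)"
          using i Uc Lc vc by (simp add: scalar_prod_def sum.distrib algebra_simps lessThan_atLeast0)
        also have "\<dots> = F (i mod n) v" unfolding F_def
          by (rule sum.cong) (use i in \<open>auto simp: U_def L_def split_U_def split_L_def N_def\<close>)
        finally show ?thesis using Mi by linarith
      qed
      then show ?thesis by auto
    qed
    finally show ?thesis .
  qed
  show ?thesis
  proof
    assume "eigenvalue (iter_mat n d B) 1"
    then obtain v where ev: "eigenvector T v 1" unfolding eigenvalue_def T_def by auto
    then have vc: "v \<in> carrier_vec N" and v0: "v \<noteq> 0\<^sub>v N" and Tv: "T *\<^sub>v v = v"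
      using Tc unfolding eigenvector_def by auto
    from key[OF vc] Tv have fx: "\<And>i. i < N \<Longrightarrow> v$i = F (i mod n) v" by auto
    define w where "w = vec n (\<lambda>r. v$r)"
    have nN: "n \<le> N" unfolding N_def using d1 by simp
    have vw: "v$i = w$(i mod n)" if "i < N" for i
    proof -
      have "i mod n < n" using n0 by simp
      then show ?thesis using fx[OF that] fx[of "i mod n"] nN unfolding w_def by simp
    qed
    have w0: "w \<noteq> 0\<^sub>v n"
    proof
      assume "w = 0\<^sub>v n"
      then have "v = 0\<^sub>v N" using vc vw n0 by (intro eq_vecI) auto
      then show False using v0 by simp
    qed
    have "BJ *\<^sub>v w = w"
    proof (rule eq_vecI)
      fix r assume r: "r < dim_vec w"
      then have rn: "r < n" unfolding w_def by simp
      have "(BJ *\<^sub>v w)$r = (\<Sum>c<n. (\<Sum>p<d. B p $$ (r,c)) * w$c)"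
        using rn BJc BJe unfolding w_def by (simp add: scalar_prod_def lessThan_atLeast0)
      also have "\<dots> = (\<Sum>p<d. \<Sum>c<n. B p $$ (r,c) * w$c)"
        by (simp add: sum_distrib_right sum.swap[of _ "{..<n}"])
      also have "\<dots> = (\<Sum>j<d*n. B (j div n) $$ (r, j mod n) * w$(j mod n))"
        using sum_divmod[where g="\<lambda>p c. B p $$ (r,c) * w$c" and d=d and n=n] by simp
      also have "\<dots> = F r v" unfolding F_def N_def
        by (rule sum.cong) (auto simp: vw[unfolded N_def])
      also have "\<dots> = v$r" using fx[of r] rn nN by simp
      finally show "(BJ *\<^sub>v w)$r = w$r" using rn unfolding w_def by simp
    qed (use BJc w_def in auto)
    then show "eigenvalue BJ 1" unfolding eigenvalue_def eigenvector_def
      using BJc w0 by (intro exI[of _ w]) (auto simp: w_def)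
  next
    assume "eigenvalue BJ 1"
    then obtain w where wc: "w \<in> carrier_vec n" and w0: "w \<noteq> 0\<^sub>v n" and BJw: "BJ *\<^sub>v w = w"
      using BJc unfolding eigenvalue_def eigenvector_def by auto
    define v where "v = vec N (\<lambda>i. w$(i mod n))"
    have vc: "v \<in> carrier_vec N" unfolding v_def by simp
    have nN: "n \<le> N" unfolding N_def using d1 by simp
    have Fr: "F r v = w$r" if rn: "r < n" for r
    proof -
      have "F r v = (\<Sum>p<d. \<Sum>c<n. B p $$ (r,c) * w$c)" unfolding F_def N_def v_def
        using sum_divmod[where g="\<lambda>p c. B p $$ (r,c) * w$c" and d=d and n=n]
        by (simp add: N_def)
      also have "\<dots> = (\<Sum>c<n. (\<Sum>p<d. B p $$ (r,c)) * w$c)"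
        by (simp add: sum_distrib_right sum.swap[of _ "{..<n}"])
      also have "\<dots> = (BJ *\<^sub>v w)$r"
        using rn BJc BJe wc by (simp add: scalar_prod_def lessThan_atLeast0)
      finally show ?thesis using BJw by simp
    qed
    have Tv: "T *\<^sub>v v = v" using key[OF vc] Fr n0 unfolding v_def by simp
    have v0: "v \<noteq> 0\<^sub>v N"
    proof
      assume h: "v = 0\<^sub>v N"
      have "w = 0\<^sub>v n"
      proof (rule eq_vecI)
        fix r assume "r < dim_vec (0\<^sub>v n :: real vec)"
        then have "r < n" by simp
        then show "w$r = 0\<^sub>v n $ r" using h nN unfolding v_def
          by (metis index_vec index_zero_vec(1) less_le_trans mod_less)
      qed (use wc in auto)
      then show False using w0 by simp
    qed
    show "eigenvalue (iter_mat n d B) 1" unfolding eigenvalue_def eigenvector_def T_def[symmetric]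
      using Tc vc v0 Tv by (intro exI[of _ v]) auto
  qed
qed

end
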